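(* Let $p>3$ be prime and $q$ a power of $p$. The following plane curves are irreducible over $\overline{\mathbb{F}}_q$: $\tilde{\mathcal{G}}_1: X^2Z^2+Y^2Z^2-X^2Y^2=0$; $\tilde{\mathcal{G}}_2: Y^2Z^2+X^2Z^2+X^2Y^2-2XYZ(X+Y+Z)=0$; $\tilde{\mathcal{G}}_3: X^6+Y^6+Z^6-2(X^3Y^3+X^3Z^3+Y^3Z^3)=0$; $\tilde{\mathcal{G}}_4: (X^2+Y^2-Z^2)^3+27X^2Y^2Z^2=0$. *)

theory Defs
  imports "HOL-Computational_Algebra.Computational_Algebra"
begin

text \<open>The polynomial ring K[X,Y,Z] is represented as K[X][Y][Z], i.e. the type
  'a poly poly poly (innermost variable X, middle Y, outermost Z).
  A plane curve is irreducible iff its defining polynomial is irreducible in this ring.\<close>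

definition varX :: "'a::comm_ring_1 poly poly poly" where
  "varX = [:[:[:0, 1:]:]:]"

definition varY :: "'a::comm_ring_1 poly poly poly" where
  "varY = [:[:0, 1:]:]"

definition varZ :: "'a::comm_ring_1 poly poly poly" where
  "varZ = [:0, 1:]"

text \<open>Every element of the field is algebraic over the prime field
  (together with algebraic closedness and characteristic p this singles out
  the algebraic closure of F_p, which equals the algebraic closure of F_q).\<close>
definition algebraic_over_prime_field :: "'a::field itself \<Rightarrow> bool" where
  "algebraic_over_prime_field _ \<longleftrightarrow>
     (\<forall>x::'a. \<exists>f::'a poly. f \<noteq> 0 \<and> (\<forall>i. coeff f i \<in> range of_nat) \<and> poly f x = 0)"

definition G1 :: "'a::comm_ring_1 poly poly poly" where
  "G1 = varX^2 * varZ^2 + varY^2 * varZ^2 - varX^2 * varY^2"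

definition G2 :: "'a::comm_ring_1 poly poly poly" where
  "G2 = varY^2 * varZ^2 + varX^2 * varZ^2 + varX^2 * varY^2
        - 2 * varX * varY * varZ * (varX + varY + varZ)"

definition G3 :: "'a::comm_ring_1 poly poly poly" where
  "G3 = varX^6 + varY^6 + varZ^6
        - 2 * (varX^3 * varY^3 + varX^3 * varZ^3 + varY^3 * varZ^3)"

definition G4 :: "'a::comm_ring_1 poly poly poly" where
  "G4 = (varX^2 + varY^2 - varZ^2)^3 + 27 * varX^2 * varY^2 * varZ^2"

end

theory Submission
  imports Defs
begin

definition vx :: "'a::comm_ring_1 poly poly" where "vx = [:[:0,1:]:]"
definition vy :: "'a::comm_ring_1 poly poly" where "vy = [:0,1:]"

lemma cp_mult: "[:(a::'a::comm_ring_1) * b:] = [:a:] * [:b:]" by simp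
lemma cp_add: "[:a + b:] = [:a:] + [:b:]" by simp
lemma cp_diff: "[:(a::'a::comm_ring_1) - b:] = [:a:] - [:b:]" by simp
lemma cp_minus: "[:- (a::'a::comm_ring_1):] = - [:a:]" by simp
lemma cp_power: "[:(a::'a::comm_ring_1) ^ n:] = [:a:] ^ n" by (simp add: poly_const_pow)
lemma cp_num: "[:numeral k:] = (numeral k :: 'a::comm_ring_1 poly)" by (simp add: numeral_poly)

lemma expand3: "[:c0, c1, c2:] = [:c0:] + [:c1:]*varZ + [:c2:]*varZ^2"
  by (simp add: varZ_def power2_eq_square)
lemma expand7: "[:c0, c1, c2, c3, c4, c5, c6:] = [:c0:] + [:c1:]*varZ + [:c2:]*varZ^2 + [:c3:]*varZ^3 + [:c4:]*varZ^4 + [:c5:]*varZ^5 + [:c6:]*varZ^6"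
  by (simp add: varZ_def power2_eq_square power3_eq_cube numeral_eq_Suc)

lemma vX: "varX = [:vx:]" by (simp add: varX_def vx_def)
lemma vY: "varY = [:vy:]" by (simp add: varY_def vy_def)

lemma G1_eq: "(G1 :: 'a::comm_ring_1 poly poly poly) = [: - (vx^2*vy^2), 0, vx^2 + vy^2 :]"
  unfolding expand3 apply (simp only: G1_def vX vY cp_mult cp_add cp_diff cp_minus cp_power cp_num one_pCons[symmetric] pCons_0_0)
  by (simp add: algebra_simps eval_nat_numeral del: mult_pCons_left mult_pCons_right add_pCons diff_pCons minus_pCons)

lemma G2_eq: "(G2 :: 'a::comm_ring_1 poly poly poly) = [: vx^2*vy^2, -2*vx*vy*(vx+vy), (vx-vy)^2 :]"
  unfolding expand3 apply (simp only: G2_def vX vY cp_mult cp_add cp_diff cp_minus cp_power cp_num one_pCons[symmetric] pCons_0_0)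
  by (simp add: algebra_simps eval_nat_numeral del: mult_pCons_left mult_pCons_right add_pCons diff_pCons minus_pCons)

lemma G3_eq: "(G3 :: 'a::comm_ring_1 poly poly poly) = [: (vx^3-vy^3)^2, 0, 0, -2*(vx^3+vy^3), 0, 0, 1 :]"
  unfolding expand7 apply (simp only: G3_def vX vY cp_mult cp_add cp_diff cp_minus cp_power cp_num one_pCons[symmetric] pCons_0_0)
  by (simp add: algebra_simps eval_nat_numeral del: mult_pCons_left mult_pCons_right add_pCons diff_pCons minus_pCons)

lemma G4_eq: "(G4 :: 'a::comm_ring_1 poly poly poly) = [: (vx^2+vy^2)^3, 0, -3*(vx^2+vy^2)^2 + 27*vx^2*vy^2, 0, 3*(vx^2+vy^2), 0, -1 :]"
  unfolding expand7 apply (simp only: G4_def vX vY cp_mult cp_add cp_diff cp_minus cp_power cp_num one_pCons[symmetric] pCons_0_0)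
  by (simp add: algebra_simps eval_nat_numeral del: mult_pCons_left mult_pCons_right add_pCons diff_pCons minus_pCons)


lemma deg1_repr: "degree (p::'b::zero poly) \<le> 1 \<Longrightarrow> p = [:coeff p 0, coeff p 1:]"
  by (rule poly_eqI) (auto simp: coeff_pCons coeff_eq_0 split: nat.split)

lemma deg2_repr: "degree (p::'b::zero poly) \<le> 2 \<Longrightarrow> p = [:coeff p 0, coeff p 1, coeff p 2:]"
  by (rule poly_eqI) (auto simp: coeff_pCons coeff_eq_0 numeral_2_eq_2 split: nat.split)

lemma const_factor_unit:
  fixes A B :: "'b::{idom_divide,algebraic_semidom} poly"
  assumes AB: "[:c0, c1, c2:] = A * B" and dA: "degree A = 0"
    and cont: "\<And>a. a dvd c0 \<Longrightarrow> a dvd c1 \<Longrightarrow> a dvd c2 \<Longrightarrow> is_unit a"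
  shows "is_unit A"
proof -
  have A: "A = [:coeff A 0:]" using degree_0_id[OF dA] by simp
  let ?a = "coeff A 0"
  have F: "[:c0, c1, c2:] = smult ?a B" using AB A by (metis mult.commute mult.right_neutral mult_smult_right smult_one)
  have "coeff [:c0, c1, c2:] 0 = ?a * coeff B 0" "coeff [:c0, c1, c2:] 1 = ?a * coeff B 1"
       "coeff [:c0, c1, c2:] 2 = ?a * coeff B 2"
    by (subst F; simp)+
  hence "?a dvd c0" "?a dvd c1" "?a dvd c2" by (simp_all add: numeral_2_eq_2)
  hence "is_unit ?a" using cont by blast
  thus ?thesis by (subst A) (simp add: is_unit_const_poly_iff)
qed

lemma quad_irred:
  fixes c0 c1 c2 :: "'b::{idom_divide,algebraic_semidom}"
  assumes c2: "c2 \<noteq> 0"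
    and cont: "\<And>a. a dvd c0 \<Longrightarrow> a dvd c1 \<Longrightarrow> a dvd c2 \<Longrightarrow> is_unit a"
    and nsq: "\<And>s. s * s \<noteq> c1 * c1 - 4 * c2 * c0"
  shows "irreducible [:c0, c1, c2:]"
proof (rule irreducibleI)
  let ?F = "[:c0, c1, c2:]"
  show "?F \<noteq> 0" using c2 by simp
  have dF: "degree ?F = 2" using c2 by simp
  show "\<not> is_unit ?F" using dF by (auto simp: is_unit_poly_iff)
  fix A B assume AB: "?F = A * B"
  have A0: "A \<noteq> 0" and B0: "B \<noteq> 0" using AB c2 by auto
  have deg: "degree A + degree B = 2" using degree_mult_eq[OF A0 B0] AB dF by simp
  show "is_unit A \<or> is_unit B"
  proof (cases "degree A = 0")
    case True thus ?thesis using const_factor_unit[OF AB True cont] by blast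
  next
    case nA: False
    show ?thesis
    proof (cases "degree B = 0")
      case True thus ?thesis using const_factor_unit[of c0 c1 c2 B A] AB cont by (simp add: mult.commute)
    next
      case False
      with nA deg have d1: "degree A = 1" "degree B = 1" by auto
      define a0 where "a0 = coeff A 0"
      define a1 where "a1 = coeff A 1"
      define b0 where "b0 = coeff B 0"
      define b1 where "b1 = coeff B 1"
      have "A = [:a0, a1:]" unfolding a0_def a1_def by (rule deg1_repr) (simp add: d1)
      moreover have "B = [:b0, b1:]" unfolding b0_def b1_def by (rule deg1_repr) (simp add: d1)
      ultimately have "[:c0, c1, c2:] = [:a0 * b0, a0 * b1 + a1 * b0, a1 * b1:]" using AB by (simp add: algebra_simps)
      hence e: "c0 = a0 * b0" "c1 = a0 * b1 + a1 * b0" "c2 = a1 * b1" by auto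
      have "(a0 * b1 - a1 * b0) * (a0 * b1 - a1 * b0) = c1 * c1 - 4 * c2 * c0"
        unfolding e by (simp add: algebra_simps)
      with nsq show ?thesis by blast
    qed
  qed
qed

lemma content_unit:
  fixes a p q :: "'b::{idom_divide,algebraic_semidom} poly"
  assumes "a dvd p" "a dvd q" "q \<noteq> 0" "degree q = 0" "lead_coeff p = 1"
  shows "is_unit a"
proof -
  obtain k where q: "q = a * k" using assms(2) by blast
  have "a \<noteq> 0" "k \<noteq> 0" using q assms(3) by auto
  hence "degree a = 0" using degree_mult_eq[of a k] q assms(4) by simp
  hence A: "a = [:coeff a 0:]" using degree_0_id by metis
  obtain m where p: "p = a * m" using assms(1) by blast
  have "lead_coeff p = lead_coeff a * lead_coeff m" using p by (simp add: lead_coeff_mult)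
  hence "coeff a 0 * lead_coeff m = 1" using assms(5) \<open>degree a = 0\<close> by simp
  hence "is_unit (coeff a 0)" by (metis dvd_triv_left)
  thus ?thesis by (subst A) (simp add: is_unit_const_poly_iff)
qed



lemma nsq_order:
  fixes D :: "'b::idom poly"
  assumes "D \<noteq> 0" "odd (order r D)"
  shows "s * s \<noteq> D"
proof
  assume sD: "s * s = D"
  hence "s * s \<noteq> 0" using assms by simp
  hence "order r (s * s) = order r s + order r s" by (rule order_mult)
  thus False using sD assms(2) by simp
qed

lemma order_lin: "order r [:-r, 1:] = 1"
  using order_power_n_n[of r 1] by simp

lemma G1_irr:
  fixes i :: "'a::field"
  assumes two: "(2::'a) \<noteq> 0" and i: "i * i = -1"
  shows "irreducible (G1 :: 'a poly poly poly)"
proof -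
  let ?c0 = "- (vx^2 * vy^2) :: 'a poly poly" and ?c2 = "vx^2 + vy^2 :: 'a poly poly"
  have c2: "?c2 = [:[:0,0,1:], 0, 1:]" by (simp add: vx_def vy_def power2_eq_square)
  have x4: "(vx^4 :: 'a poly poly) = [:[:0,0,0,0,1:]:]" by (simp add: vx_def eval_nat_numeral)
  have cont: "is_unit a" if "a dvd ?c0" "a dvd 0" "a dvd ?c2" for a
  proof (rule content_unit)
    show "a dvd ?c2" by fact
    have "(vx::'a poly poly)^4 = vx^2 * ?c2 + ?c0" by (simp add: algebra_simps eval_nat_numeral)
    thus "a dvd (vx::'a poly poly)^4" using that by (metis dvd_add dvd_mult)
    show "(vx::'a poly poly)^4 \<noteq> 0" using x4 by simp
    show "degree ((vx::'a poly poly)^4) = 0" using x4 by simp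
    show "lead_coeff ?c2 = 1" unfolding c2 by simp
  qed
  define r :: "'a poly" where "r = [:0, i:]"
  have i0: "i \<noteq> 0" using i by auto
  define Q :: "'a poly poly" where "Q = 4 * vx^2 * vy^2 * (vy + [:r:])"
  have rr: "[:r:] * [:r:] = - (vx^2)" unfolding r_def vx_def
    by (simp add: power2_eq_square i)
  have lin: "[:-r, 1:] = vy - [:r:]" by (simp add: vy_def)
  have D: "0 * 0 - 4 * ?c2 * ?c0 = [:-r, 1:] * Q"
  proof -
    have gen: "\<And>X Y R :: 'a poly poly. R * R = - (X^2) \<Longrightarrow>
       0 * 0 - 4 * (X^2 + Y^2) * (- (X^2 * Y^2)) = (Y - R) * (4 * X^2 * Y^2 * (Y + R))"
      by algebra
    show ?thesis unfolding lin Q_def by (rule gen[OF rr])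
  qed
  have e8: "(8::'a) = 2 * 2 * 2" by simp
  have eight: "(8::'a) \<noteq> 0" unfolding e8 using two by (simp only: mult_eq_0_iff) simp
  have eight': "(8::'a poly) \<noteq> 0" using eight by (metis numeral_poly pCons_eq_0_iff)
  have pQ: "poly Q r \<noteq> 0"
    unfolding Q_def r_def using eight' i0 by (simp add: vx_def vy_def)
  have Q0: "Q \<noteq> 0" using pQ by auto
  have nz: "[:-r, 1:] * Q \<noteq> 0" using Q0 by (metis mult_eq_0_iff pCons_eq_0_iff one_neq_zero)
  have om: "order r ([:-r,1:] * Q) = order r [:-r,1:] + order r Q" by (rule order_mult[OF nz])
  have ordD: "order r ([:-r, 1:] * Q) = 1"
    unfolding om order_lin order_0I[OF pQ] by simp
  have nsq: "s * s \<noteq> 0 * 0 - 4 * ?c2 * ?c0" for s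
    unfolding D by (rule nsq_order[where r=r, OF nz]) (unfold ordD, simp)
  have c2nz: "?c2 \<noteq> 0" unfolding c2 by simp
  show ?thesis unfolding G1_eq by (rule quad_irred[OF c2nz cont nsq])
qed



lemma G2_irr:
  fixes i :: "'a::field"
  assumes two: "(2::'a) \<noteq> 0"
  shows "irreducible (G2 :: 'a poly poly poly)"
proof -
  let ?c0 = "vx^2 * vy^2 :: 'a poly poly" and ?c1 = "-2*vx*vy*(vx+vy) :: 'a poly poly"
    and ?c2 = "(vx-vy)^2 :: 'a poly poly"
  have c2: "?c2 = [:[:0,0,1:], [:0,-2:], 1:]" by (simp add: vx_def vy_def power2_eq_square)
  have x4: "(- (vx^4) :: 'a poly poly) = [:[:0,0,0,0,-1:]:]" by (simp add: vx_def eval_nat_numeral)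
  have cont: "is_unit a" if "a dvd ?c0" "a dvd ?c1" "a dvd ?c2" for a
  proof (rule content_unit)
    show "a dvd ?c2" by fact
    have gen: "\<And>X Y :: 'a poly poly. - (X^4) = 3 * (X^2 * Y^2) + X * (-2*X*Y*(X+Y)) - X^2 * (X-Y)^2"
      by algebra
    have "(- (vx^4) :: 'a poly poly) = 3 * ?c0 + vx * ?c1 - vx^2 * ?c2" by (rule gen)
    thus "a dvd (- (vx^4) :: 'a poly poly)" using that by (metis dvd_add dvd_diff dvd_mult)
    show "(- (vx^4)::'a poly poly) \<noteq> 0" using x4 by simp
    show "degree (- (vx^4)::'a poly poly) = 0" using x4 by simp
    show "lead_coeff ?c2 = 1" unfolding c2 by simp
  qed
  define Q :: "'a poly poly" where "Q = 16 * vx^3"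
  have lin: "[:-0, 1:] = (vy :: 'a poly poly)" by (simp add: vy_def)
  have D: "?c1 * ?c1 - 4 * ?c2 * ?c0 = [:-0, 1:]^3 * Q"
  proof -
    have gen: "\<And>X Y :: 'a poly poly.
       (-2*X*Y*(X+Y)) * (-2*X*Y*(X+Y)) - 4 * (X-Y)^2 * (X^2 * Y^2) = Y^3 * (16 * X^3)"
      by algebra
    show ?thesis unfolding lin Q_def by (rule gen)
  qed
  have "(16::'a) = 2 * 2 * 2 * 2" by simp
  hence e16: "(16::'a) \<noteq> 0" using two by (simp only: mult_eq_0_iff) simp
  have e16': "(16::'a poly) \<noteq> 0" using e16 by (metis numeral_poly pCons_eq_0_iff)
  have pQ: "poly Q 0 \<noteq> 0"
    unfolding Q_def using e16' by (simp add: vx_def)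
  have Q0: "Q \<noteq> 0" using pQ by auto
  have nz: "[:-0, 1:]^3 * Q \<noteq> 0" using Q0 by (metis mult_eq_0_iff pCons_eq_0_iff one_neq_zero power_not_zero)
  have om: "order 0 ([:-0,1:]^3 * Q) = order 0 ([:-0,1:]^3 :: 'a poly poly) + order 0 Q" by (rule order_mult[OF nz])
  have ordD: "order 0 ([:-0, 1:]^3 * Q) = 3"
    unfolding om order_power_n_n order_0I[OF pQ] by simp
  have nsq: "s * s \<noteq> ?c1 * ?c1 - 4 * ?c2 * ?c0" for s
    unfolding D by (rule nsq_order[where r=0, OF nz]) (unfold ordD, simp)
  have c2nz: "?c2 \<noteq> 0" unfolding c2 by simp
  show ?thesis unfolding G2_eq by (rule quad_irred[OF c2nz cont nsq])
qed



definition is_hom :: "('b::comm_ring_1 \<Rightarrow> 'c::comm_ring_1) \<Rightarrow> bool" where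
  "is_hom f \<longleftrightarrow> (\<forall>x y. f (x + y) = f x + f y) \<and> (\<forall>x y. f (x * y) = f x * f y) \<and> f 1 = 1"

lemma hom_add: "is_hom f \<Longrightarrow> f (x + y) = f x + f y" by (simp add: is_hom_def)
lemma hom_mult: "is_hom f \<Longrightarrow> f (x * y) = f x * f y" by (simp add: is_hom_def)
lemma hom_one: "is_hom f \<Longrightarrow> f 1 = 1" by (simp add: is_hom_def)
lemma hom_zero: "is_hom f \<Longrightarrow> f 0 = 0"
proof -
  assume h: "is_hom f"
  have "f 0 = f (0 + 0)" by simp
  also have "\<dots> = f 0 + f 0" by (rule hom_add[OF h])
  finally show ?thesis by simp
qed
lemma hom_uminus: "is_hom f \<Longrightarrow> f (- x) = - f x"
proof -
  assume h: "is_hom f"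
  have "f x + f (- x) = f (x + - x)" by (rule hom_add[OF h, symmetric])
  also have "\<dots> = 0" using hom_zero[OF h] by simp
  finally show ?thesis by (simp only: add_eq_0_iff)
qed
lemma hom_diff: assumes h: "is_hom f" shows "f (x - y) = f x - f y"
proof -
  have "f (x - y) = f (x + - y)" by simp
  also have "\<dots> = f x + f (- y)" by (rule hom_add[OF h])
  finally show ?thesis by (simp add: hom_uminus[OF h])
qed
lemma hom_of_nat: assumes h: "is_hom f" shows "f (of_nat m) = of_nat m"
proof (induction m)
  case 0 thus ?case by (simp add: hom_zero[OF h])
next
  case (Suc m)
  have "f (of_nat (Suc m)) = f (1 + of_nat m)" by simp
  also have "\<dots> = f 1 + f (of_nat m)" by (rule hom_add[OF h])
  finally show ?case using Suc by (simp add: hom_one[OF h])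
qed
lemma hom_numeral: "is_hom f \<Longrightarrow> f (numeral k) = numeral k"
  using hom_of_nat[of f "numeral k"] by simp
lemma hom_power: assumes h: "is_hom f" shows "f (x ^ m) = f x ^ m"
proof (induction m)
  case 0 thus ?case by (simp add: hom_one[OF h])
next
  case (Suc m)
  have "f (x ^ Suc m) = f (x * x ^ m)" by simp
  also have "\<dots> = f x * f (x ^ m)" by (rule hom_mult[OF h])
  finally show ?case using Suc by simp
qed
lemma hom_comp:
  assumes "is_hom f" "is_hom g" shows "is_hom (f \<circ> g)"
  unfolding is_hom_def o_def
  by (simp add: hom_add[OF assms(1)] hom_add[OF assms(2)] hom_mult[OF assms(1)] hom_mult[OF assms(2)]
        hom_one[OF assms(1)] hom_one[OF assms(2)])

lemma f_sum: assumes h: "is_hom f" shows "f (\<Sum>i\<le>(n::nat). g i) = (\<Sum>i\<le>n. f (g i))"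
  by (induction n) (simp_all add: hom_zero[OF h] hom_add[OF h])

lemma hom_map_poly: "is_hom f \<Longrightarrow> is_hom (map_poly f)"
proof -
  assume h: "is_hom f"
  have z: "f 0 = 0" by (rule hom_zero[OF h])
  show ?thesis unfolding is_hom_def
  proof (intro conjI allI)
    fix p q
    show "map_poly f (p + q) = map_poly f p + map_poly f q"
      by (rule poly_eqI) (simp add: coeff_map_poly z hom_add[OF h])
    show "map_poly f (p * q) = map_poly f p * map_poly f q"
      by (rule poly_eqI) (simp add: coeff_map_poly z coeff_mult f_sum[OF h] hom_mult[OF h])
  next
    show "map_poly f 1 = 1"
      by (rule poly_eqI) (simp add: coeff_map_poly z hom_one[OF h] coeff_1)
  qed
qed

lemma hom_pcompose: "is_hom (\<lambda>p. pcompose p q)"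
  by (simp add: is_hom_def pcompose_add pcompose_mult pcompose_1)

lemma coeff_pcompose_monom:
  assumes "n > 0"
  shows "coeff (pcompose (p::'b::comm_ring_1 poly) (monom 1 n)) j = (if n dvd j then coeff p (j div n) else 0)"
proof (induction p arbitrary: j)
  case 0 thus ?case by simp
next
  case (pCons a p)
  have e: "pcompose (pCons a p) (monom 1 n) = [:a:] + monom 1 n * pcompose p (monom 1 n)"
    by (rule pcompose_pCons)
  show ?case
  proof (cases "j = 0")
    case True thus ?thesis using assms by (simp add: e coeff_monom_mult)
  next
    case False
    have "coeff (pcompose (pCons a p) (monom 1 n)) j = (if j < n then 0 else coeff (pcompose p (monom 1 n)) (j - n))"
      using False by (simp add: e coeff_monom_mult coeff_pCons split: nat.split)
    also have "\<dots> = (if n dvd j then coeff (pCons a p) (j div n) else 0)"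
    proof (cases "j < n")
      case True thus ?thesis using False by (auto dest: dvd_imp_le)
    next
      case jn: False
      then obtain m where m: "j = n + m" by (metis le_add_diff_inverse not_less)
      have "n dvd j \<longleftrightarrow> n dvd m" using m by simp
      moreover have "j div n = Suc (m div n)" using m assms by simp
      ultimately show ?thesis using jn m pCons.IH by (simp add: coeff_pCons)
    qed
    finally show ?thesis .
  qed
qed

definition subi :: "nat \<Rightarrow> 'a::comm_ring_1 poly \<Rightarrow> 'a poly" where
  "subi n d = pcompose d (monom 1 n)"
definition sub2 :: "nat \<Rightarrow> 'a::comm_ring_1 poly poly \<Rightarrow> 'a poly poly" where
  "sub2 n c = pcompose (map_poly (subi n) c) (monom 1 n)"
definition sub3 :: "nat \<Rightarrow> 'a::comm_ring_1 poly poly poly \<Rightarrow> 'a poly poly poly" where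
  "sub3 n F = map_poly (sub2 n) F"

lemma hom_subi: "is_hom (subi n)"
  unfolding subi_def by (rule hom_pcompose)

lemma hom_sub2: "is_hom (sub2 n)"
proof -
  have eq: "sub2 n = (\<lambda>p. pcompose p (monom 1 n)) \<circ> map_poly (subi n)"
    by (rule ext) (simp add: sub2_def)
  show ?thesis unfolding eq by (rule hom_comp[OF hom_pcompose hom_map_poly[OF hom_subi]])
qed

lemma hom_sub3: "is_hom (sub3 n)"
proof -
  have eq: "sub3 n = map_poly (sub2 n)" by (rule ext) (simp add: sub3_def)
  show ?thesis unfolding eq by (rule hom_map_poly[OF hom_sub2])
qed

lemma coeff_sub2:
  assumes "n > 0" "coeff (coeff (sub2 n c) j) i \<noteq> 0"
  shows "n dvd j \<and> n dvd i"
proof -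
  have z: "subi n 0 = 0" by (rule hom_zero[OF hom_subi])
  have "coeff (sub2 n c) j = (if n dvd j then subi n (coeff c (j div n)) else 0)"
    unfolding sub2_def using assms(1) by (simp add: coeff_pcompose_monom coeff_map_poly z)
  with assms(2) have j: "n dvd j" and c: "coeff (subi n (coeff c (j div n))) i \<noteq> 0"
    by (auto split: if_splits)
  from c have "n dvd i" unfolding subi_def using assms(1) by (simp add: coeff_pcompose_monom split: if_splits)
  with j show ?thesis by simp
qed

lemma coeff_sub3: "coeff (sub3 n F) k = sub2 n (coeff F k)"
  unfolding sub3_def by (simp add: coeff_map_poly hom_zero[OF hom_sub2])

lemma sub2_const: "sub2 n [:[:k:]:] = [:[:k:]:]"
  by (simp add: sub2_def map_poly_pCons[of "subi n", OF hom_zero[OF hom_subi]]) (simp add: subi_def)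

lemma mp_const: "f 0 = 0 \<Longrightarrow> map_poly f [:c:] = [:f c:]"
  by (simp add: map_poly_pCons)
lemma mp_lin: "f 0 = 0 \<Longrightarrow> f 1 = 1 \<Longrightarrow> map_poly f [:0, 1:] = [:0, 1:]"
  by (simp add: map_poly_pCons)
lemma pc_X: "pcompose [:0, 1:] (q::'b::comm_ring_1 poly) = q" by (simp add: pcompose_pCons)
lemma monom_X: "monom (1::'b::comm_ring_1) n = [:0, 1:] ^ n" by (simp add: monom_altdef)

lemma sub3_varX: "sub3 n varX = varX ^ n"
  unfolding sub3_def varX_def poly_const_pow
  by (simp add: mp_const hom_zero[OF hom_sub2] hom_zero[OF hom_subi] sub2_def subi_def pc_X monom_X)

lemma sub3_varY: "sub3 n varY = varY ^ n"
  unfolding sub3_def varY_def poly_const_pow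
  by (simp add: mp_const hom_zero[OF hom_sub2] sub2_def mp_lin hom_zero[OF hom_subi] hom_one[OF hom_subi] pc_X monom_X)

lemma sub3_varZ: "sub3 n varZ = varZ"
  unfolding sub3_def varZ_def by (simp add: mp_lin hom_zero[OF hom_sub2] hom_one[OF hom_sub2])



lemma ord_gt_dvd:
  fixes x :: "'b::idom poly"
  shows "(x = 0 \<or> m < order r x) \<longleftrightarrow> [:-r,1:]^Suc m dvd x"
proof
  assume "x = 0 \<or> m < order r x"
  thus "[:-r,1:]^Suc m dvd x"
  proof
    assume "m < order r x"
    thus ?thesis using order_1[of r x] power_le_dvd[of "[:-r,1:]" "order r x" x "Suc m"] by simp
  qed simp
next
  assume d: "[:-r,1:]^Suc m dvd x"
  show "x = 0 \<or> m < order r x"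
  proof (rule ccontr)
    assume "\<not> (x = 0 \<or> m < order r x)"
    hence x0: "x \<noteq> 0" and le: "order r x \<le> m" by auto
    have "[:-r,1:]^Suc (order r x) dvd x" using power_le_dvd[OF d, of "Suc (order r x)"] le by simp
    thus False using order_2[OF x0] by blast
  qed
qed

lemma ord_three:
  fixes x y z :: "'b::idom poly"
  assumes x0: "x \<noteq> 0" and y: "y = 0 \<or> order r x < order r y" and z: "z = 0 \<or> order r x < order r z"
  shows "\<not> [:-r,1:]^Suc (order r x) dvd (x + y + z)"
proof
  define P where "P = [:-r,1:]^Suc (order r x)"
  assume d: "[:-r,1:]^Suc (order r x) dvd (x + y + z)"
  hence d': "P dvd x + y + z" unfolding P_def .
  have dy: "P dvd y" unfolding P_def using y ord_gt_dvd by blast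
  have dz: "P dvd z" unfolding P_def using z ord_gt_dvd by blast
  have "P dvd (x + y + z) - y - z" by (intro dvd_diff d' dy dz)
  moreover have "x + y + z - y - z = x" by simp
  ultimately have "P dvd x" by simp
  thus False using order_2[OF x0] unfolding P_def by blast
qed

lemma monic_div:
  fixes C D :: "'b::idom poly"
  assumes "lead_coeff C = 1"
  shows "\<exists>q r. D = C * q + r \<and> (r = 0 \<or> degree r < degree C)"
proof -
  have C0: "C \<noteq> 0" using assms by auto
  obtain q r where pd: "pseudo_divmod D C = (q, r)" by (cases "pseudo_divmod D C") auto
  from pseudo_divmod[OF C0 pd] assms show ?thesis by auto
qed

lemma prime_from_key:
  fixes C :: "'b::idom_divide poly"
  assumes lc: "lead_coeff C = 1" and dC: "degree C > 0"
    and key: "\<And>r1 r2. r1 \<noteq> 0 \<Longrightarrow> r2 \<noteq> 0 \<Longrightarrow> degree r1 < degree C \<Longrightarrow> degree r2 < degree C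
              \<Longrightarrow> C dvd r1 * r2 \<Longrightarrow> False"
  shows "prime_elem C"
proof (rule prime_elemI)
  show C0: "C \<noteq> 0" using lc by auto
  show "\<not> is_unit C" using dC by (auto simp: is_unit_poly_iff)
  fix D E assume dv: "C dvd D * E"
  obtain q1 r1 where D: "D = C * q1 + r1" and r1: "r1 = 0 \<or> degree r1 < degree C" using monic_div[OF lc] by blast
  obtain q2 r2 where E: "E = C * q2 + r2" and r2: "r2 = 0 \<or> degree r2 < degree C" using monic_div[OF lc] by blast
  show "C dvd D \<or> C dvd E"
  proof (rule ccontr)
    assume n: "\<not> (C dvd D \<or> C dvd E)"
    hence "r1 \<noteq> 0" "r2 \<noteq> 0" using D E by auto
    hence d1: "degree r1 < degree C" and d2: "degree r2 < degree C" using r1 r2 by auto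
    have "D * E = C * (q1 * C * q2 + q1 * r2 + r1 * q2) + r1 * r2" unfolding D E by (simp add: algebra_simps)
    hence "C dvd r1 * r2" using dv by (metis dvd_add_right_iff dvd_triv_left)
    thus False using key[OF \<open>r1 \<noteq> 0\<close> \<open>r2 \<noteq> 0\<close> d1 d2] by blast
  qed
qed

lemma prime_quad:
  fixes W :: "'b::idom_divide poly"
  assumes W0: "W \<noteq> 0" and oddW: "odd (order r W)"
  shows "prime_elem [:-W, 0, 1:]"
proof (rule prime_from_key)
  let ?C = "[:-W, 0, 1:]"
  show "lead_coeff ?C = 1" by simp
  show "degree ?C > 0" by simp
  fix r1 r2 assume r10: "r1 \<noteq> 0" and r20: "r2 \<noteq> 0" and d1: "degree r1 < degree ?C"
    and d2: "degree r2 < degree ?C" and dv: "?C dvd r1 * r2"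
  obtain k where k: "r1 * r2 = ?C * k" using dv by blast
  have k0: "k \<noteq> 0" using k r10 r20 by auto
  have "degree (r1 * r2) = degree r1 + degree r2" using r10 r20 by (simp add: degree_mult_eq)
  moreover have "degree (?C * k) = degree ?C + degree k" by (rule degree_mult_eq) (simp, rule k0)
  ultimately have "degree k = 0" using d1 d2 k by simp
  hence kc: "k = [:coeff k 0:]" using degree_0_id by metis
  define k0 where "k0 = coeff k 0"
  define p0 where "p0 = coeff r1 0"
  define p1 where "p1 = coeff r1 1"
  define q0 where "q0 = coeff r2 0"
  define q1 where "q1 = coeff r2 1"
  have R1: "r1 = [:p0, p1:]" unfolding p0_def p1_def by (rule deg1_repr) (use d1 in simp)
  have R2: "r2 = [:q0, q1:]" unfolding q0_def q1_def by (rule deg1_repr) (use d2 in simp)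
  have eq: "[:p0, p1:] * [:q0, q1:] = ?C * [:k0:]" using k kc R1 R2 k0_def by simp
  have c0: "p0 * q0 = - W * k0" using arg_cong[OF eq, of "\<lambda>p. coeff p 0"] by (simp add: algebra_simps)
  have c1: "p0 * q1 + p1 * q0 = 0" using arg_cong[OF eq, of "\<lambda>p. coeff p 1"] by (simp add: algebra_simps)
  have c2: "p1 * q1 = k0" using arg_cong[OF eq, of "\<lambda>p. coeff p 2"] by (simp add: numeral_2_eq_2 mult.commute)
  have e0: "p0 * q0 + W * (p1 * q1) = 0" using c0 c2 by (simp add: algebra_simps)
  have gen: "\<And>a b c d w :: 'b poly. a * c + w * (b * d) = 0 \<Longrightarrow> a * d + b * c = 0 \<Longrightarrow>
      (a * a - w * (b * b)) * c = 0 \<and> (a * a - w * (b * b)) * d = 0"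
    by algebra
  from gen[OF e0 c1] have N: "(p0 * p0 - W * (p1 * p1)) * q0 = 0" "(p0 * p0 - W * (p1 * p1)) * q1 = 0" by auto
  have "q0 \<noteq> 0 \<or> q1 \<noteq> 0" using r20 R2 by auto
  hence NN: "p0 * p0 = W * (p1 * p1)" using N by auto
  show False
  proof (cases "p1 = 0")
    case True
    hence "p0 = 0" using NN by simp
    thus False using True R1 r10 by simp
  next
    case False
    hence p00: "p0 \<noteq> 0" using NN W0 by auto
    have "order r (p0 * p0) = order r p0 + order r p0" by (rule order_mult) (use p00 in simp)
    moreover have "order r (W * (p1 * p1)) = order r W + (order r p1 + order r p1)"
      using order_mult[of W "p1 * p1" r] order_mult[of p1 p1 r] W0 False by simp
    moreover have "order r (p0 * p0) = order r (W * (p1 * p1))" using NN by simp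
    ultimately show False using oddW by presburger
  qed
qed



lemma deg2_repr': "degree (p::'b::zero poly) < 3 \<Longrightarrow> p = [:coeff p 0, coeff p 1, coeff p 2:]"
  by (rule deg2_repr) simp

lemma ord3_val:
  fixes W p :: "'b::idom poly"
  assumes "W \<noteq> 0" "p \<noteq> 0"
  shows "order r (W ^ j * p ^ 3) = j * order r W + 3 * order r p"
proof -
  have "W ^ j \<noteq> 0" "p ^ 3 \<noteq> 0" using assms by auto
  hence "order r (W ^ j * p ^ 3) = order r (W ^ j) + order r (p ^ 3)" by (intro order_mult) simp
  moreover have "order r (W ^ j) = j * order r W" for j
    using assms(1) by (induction j) (simp_all add: order_mult)
  moreover have "order r (p ^ 3) = 3 * order r p"
    using assms(2) by (simp add: eval_nat_numeral order_mult)
  ultimately show ?thesis by simp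
qed

lemma comb3:
  fixes a b c :: nat
  assumes "\<not> (A \<and> B \<and> C)"
  shows "(\<not> A \<and> (B \<or> 3 * a < 2 + 3 * b) \<and> (C \<or> 3 * a < 4 + 3 * c)) \<or>
         (\<not> B \<and> (A \<or> 2 + 3 * b < 3 * a) \<and> (C \<or> 2 + 3 * b < 4 + 3 * c)) \<or>
         (\<not> C \<and> (A \<or> 4 + 3 * c < 3 * a) \<and> (B \<or> 4 + 3 * c < 2 + 3 * b))"
  using assms by (cases A; cases B; cases C) presburger+

lemma cubic_norm_zero:
  fixes W p0 p1 p2 :: "'b::idom poly"
  assumes W0: "W \<noteq> 0" and oW: "order r W = 2" and three: "(3::'b) \<noteq> 0"
    and N: "W ^ 0 * p0 ^ 3 + W ^ 1 * p1 ^ 3 + W ^ 2 * p2 ^ 3 = 3 * W * p0 * p1 * p2"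
  shows "p0 = 0 \<and> p1 = 0 \<and> p2 = 0"
proof (rule ccontr)
  assume nz: "\<not> (p0 = 0 \<and> p1 = 0 \<and> p2 = 0)"
  define T0 where "T0 = W ^ 0 * p0 ^ 3"
  define T1 where "T1 = W ^ 1 * p1 ^ 3"
  define T2 where "T2 = W ^ 2 * p2 ^ 3"
  define RHS where "RHS = 3 * W * p0 * p1 * p2"
  have z0: "T0 = 0 \<longleftrightarrow> p0 = 0" unfolding T0_def using W0 by simp
  have z1: "T1 = 0 \<longleftrightarrow> p1 = 0" unfolding T1_def using W0 by simp
  have z2: "T2 = 0 \<longleftrightarrow> p2 = 0" unfolding T2_def using W0 by simp
  have o0: "p0 \<noteq> 0 \<Longrightarrow> order r T0 = 3 * order r p0" unfolding T0_def using ord3_val[OF W0, of p0 r 0] by simp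
  have o1: "p1 \<noteq> 0 \<Longrightarrow> order r T1 = 2 + 3 * order r p1" unfolding T1_def using ord3_val[OF W0, of p1 r 1] oW by simp
  have o2: "p2 \<noteq> 0 \<Longrightarrow> order r T2 = 4 + 3 * order r p2" unfolding T2_def using ord3_val[OF W0, of p2 r 2] oW by simp
  have three': "(3::'b poly) \<noteq> 0" using three by (metis numeral_poly pCons_eq_0_iff)
  have oR: "p0 \<noteq> 0 \<Longrightarrow> p1 \<noteq> 0 \<Longrightarrow> p2 \<noteq> 0 \<Longrightarrow> RHS \<noteq> 0 \<and>
      order r RHS = 2 + order r p0 + order r p1 + order r p2"
  proof -
    assume a: "p0 \<noteq> 0" "p1 \<noteq> 0" "p2 \<noteq> 0"
    have "order r (3::'b poly) = 0" using three by (intro order_0I) (simp add: numeral_poly)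
    moreover have "RHS \<noteq> 0" unfolding RHS_def using a three' W0 by simp
    moreover have "order r RHS = order r (3::'b poly) + order r W + order r p0 + order r p1 + order r p2"
      unfolding RHS_def using a three' W0 by (simp add: order_mult)
    ultimately show ?thesis using oW by simp
  qed
  have sumeq: "T0 + T1 + T2 = RHS" using N unfolding T0_def T1_def T2_def RHS_def .
  have RHS0: "\<not> (p0 \<noteq> 0 \<and> p1 \<noteq> 0 \<and> p2 \<noteq> 0) \<Longrightarrow> RHS = 0" unfolding RHS_def by auto
  have fin: "False" if xnz: "x \<noteq> 0" and y: "y = 0 \<or> order r x < order r y" and z: "z = 0 \<or> order r x < order r z"
     and s: "x + y + z = RHS" and R: "RHS = 0 \<or> order r x < order r RHS" for x y z
  proof -
    have "[:-r,1:]^Suc (order r x) dvd RHS" using R ord_gt_dvd by blast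
    thus False using ord_three[OF xnz y z] s by simp
  qed
  let ?a = "order r p0" and ?b = "order r p1" and ?c = "order r p2"
  have cases: "(p0 \<noteq> 0 \<and> (p1 = 0 \<or> 3 * ?a < 2 + 3 * ?b) \<and> (p2 = 0 \<or> 3 * ?a < 4 + 3 * ?c)) \<or>
               (p1 \<noteq> 0 \<and> (p0 = 0 \<or> 2 + 3 * ?b < 3 * ?a) \<and> (p2 = 0 \<or> 2 + 3 * ?b < 4 + 3 * ?c)) \<or>
               (p2 \<noteq> 0 \<and> (p0 = 0 \<or> 4 + 3 * ?c < 3 * ?a) \<and> (p1 = 0 \<or> 4 + 3 * ?c < 2 + 3 * ?b))"
    using comb3[of "p0 = 0" "p1 = 0" "p2 = 0"] nz by blast
  have Rb: "RHS = 0 \<or> (p0 \<noteq> 0 \<and> p1 \<noteq> 0 \<and> p2 \<noteq> 0 \<and> order r RHS = 2 + ?a + ?b + ?c)"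
    using oR RHS0 by blast
  have n0: "\<not> (p0 \<noteq> 0 \<and> (p1 = 0 \<or> 3 * ?a < 2 + 3 * ?b) \<and> (p2 = 0 \<or> 3 * ?a < 4 + 3 * ?c))"
  proof
    assume "p0 \<noteq> 0 \<and> (p1 = 0 \<or> 3 * ?a < 2 + 3 * ?b) \<and> (p2 = 0 \<or> 3 * ?a < 4 + 3 * ?c)"
    hence a: "p0 \<noteq> 0" "p1 = 0 \<or> 3 * ?a < 2 + 3 * ?b" "p2 = 0 \<or> 3 * ?a < 4 + 3 * ?c" by auto
    have h1: "T0 \<noteq> 0" using a z0 by simp
    have h2: "T1 = 0 \<or> order r T0 < order r T1" using a o0 o1 z1 by auto
    have h3: "T2 = 0 \<or> order r T0 < order r T2" using a o0 o2 z2 by auto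
    have h4: "T0 + T1 + T2 = RHS" by (rule sumeq)
    have h5: "RHS = 0 \<or> order r T0 < order r RHS" using Rb a o0 by auto
    show False by (rule fin[OF h1 h2 h3 h4 h5])
  qed
  have n1: "\<not> (p1 \<noteq> 0 \<and> (p0 = 0 \<or> 2 + 3 * ?b < 3 * ?a) \<and> (p2 = 0 \<or> 2 + 3 * ?b < 4 + 3 * ?c))"
  proof
    assume "p1 \<noteq> 0 \<and> (p0 = 0 \<or> 2 + 3 * ?b < 3 * ?a) \<and> (p2 = 0 \<or> 2 + 3 * ?b < 4 + 3 * ?c)"
    hence a: "p1 \<noteq> 0" "p0 = 0 \<or> 2 + 3 * ?b < 3 * ?a" "p2 = 0 \<or> 2 + 3 * ?b < 4 + 3 * ?c" by auto
    have h1: "T1 \<noteq> 0" using a z1 by simp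
    have h2: "T0 = 0 \<or> order r T1 < order r T0" using a o0 o1 z0 by auto
    have h3: "T2 = 0 \<or> order r T1 < order r T2" using a o1 o2 z2 by auto
    have h4: "T1 + T0 + T2 = RHS" using sumeq by (simp add: algebra_simps)
    have h5: "RHS = 0 \<or> order r T1 < order r RHS" using Rb a o1 by auto
    show False by (rule fin[OF h1 h2 h3 h4 h5])
  qed
  have n2: "\<not> (p2 \<noteq> 0 \<and> (p0 = 0 \<or> 4 + 3 * ?c < 3 * ?a) \<and> (p1 = 0 \<or> 4 + 3 * ?c < 2 + 3 * ?b))"
  proof
    assume "p2 \<noteq> 0 \<and> (p0 = 0 \<or> 4 + 3 * ?c < 3 * ?a) \<and> (p1 = 0 \<or> 4 + 3 * ?c < 2 + 3 * ?b)"
    hence a: "p2 \<noteq> 0" "p0 = 0 \<or> 4 + 3 * ?c < 3 * ?a" "p1 = 0 \<or> 4 + 3 * ?c < 2 + 3 * ?b" by auto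
    have h1: "T2 \<noteq> 0" using a z2 by simp
    have h2: "T0 = 0 \<or> order r T2 < order r T0" using a o0 o2 z0 by auto
    have h3: "T1 = 0 \<or> order r T2 < order r T1" using a o1 o2 z1 by auto
    have h4: "T2 + T0 + T1 = RHS" using sumeq by (simp add: algebra_simps)
    have h5: "RHS = 0 \<or> order r T2 < order r RHS" using Rb a o2 by auto
    show False by (rule fin[OF h1 h2 h3 h4 h5])
  qed
  show False using cases n0 n1 n2 by blast
qed

lemma prime_cubic:
  fixes W :: "'b::idom_divide poly"
  assumes W0: "W \<noteq> 0" and oW: "order r W = 2" and three: "(3::'b) \<noteq> 0"
  shows "prime_elem [:-W, 0, 0, 1:]"
proof (rule prime_from_key)
  let ?C = "[:-W, 0, 0, 1:]"
  show "lead_coeff ?C = 1" by simp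
  show "degree ?C > 0" by simp
  fix r1 r2 assume r10: "r1 \<noteq> 0" and r20: "r2 \<noteq> 0" and d1: "degree r1 < degree ?C"
    and d2: "degree r2 < degree ?C" and dv: "?C dvd r1 * r2"
  obtain k where k: "r1 * r2 = ?C * k" using dv by blast
  have k0: "k \<noteq> 0" using k r10 r20 by auto
  have "degree (r1 * r2) = degree r1 + degree r2" using r10 r20 by (simp add: degree_mult_eq)
  moreover have "degree (?C * k) = degree ?C + degree k" by (rule degree_mult_eq) (simp, rule k0)
  ultimately have "degree k \<le> 1" using d1 d2 k by simp
  hence kc: "k = [:coeff k 0, coeff k 1:]" by (rule deg1_repr)
  define k0 where "k0 = coeff k 0"
  define k1 where "k1 = coeff k 1"
  define p0 where "p0 = coeff r1 0"
  define p1 where "p1 = coeff r1 1"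
  define p2 where "p2 = coeff r1 2"
  define q0 where "q0 = coeff r2 0"
  define q1 where "q1 = coeff r2 1"
  define q2 where "q2 = coeff r2 2"
  have R1: "r1 = [:p0, p1, p2:]" unfolding p0_def p1_def p2_def by (rule deg2_repr') (use d1 in simp)
  have R2: "r2 = [:q0, q1, q2:]" unfolding q0_def q1_def q2_def by (rule deg2_repr') (use d2 in simp)
  have eq: "[:p0, p1, p2:] * [:q0, q1, q2:] = ?C * [:k0, k1:]" using k kc R1 R2 k0_def k1_def by simp
  have c0: "p0 * q0 = - W * k0" using arg_cong[OF eq, of "\<lambda>p. coeff p 0"] by (simp add: algebra_simps)
  have c1: "p0 * q1 + p1 * q0 = - W * k1" using arg_cong[OF eq, of "\<lambda>p. coeff p 1"] by (simp add: algebra_simps)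
  have c2: "p0 * q2 + p1 * q1 + p2 * q0 = 0" using arg_cong[OF eq, of "\<lambda>p. coeff p 2"] by (simp add: algebra_simps numeral_2_eq_2)
  have c3: "p1 * q2 + p2 * q1 = k0" using arg_cong[OF eq, of "\<lambda>p. coeff p 3"] by (simp add: algebra_simps numeral_3_eq_3)
  have c4: "p2 * q2 = k1" using arg_cong[OF eq, of "\<lambda>p. coeff p 4"] by (simp add: algebra_simps eval_nat_numeral)
  have e0: "p0 * q0 + W * (p1 * q2 + p2 * q1) = 0" using c0 c3 by (simp add: algebra_simps)
  have e1: "p0 * q1 + p1 * q0 + W * (p2 * q2) = 0" using c1 c4 by (simp add: algebra_simps)
  have gen: "\<And>a b c x y z w :: 'b poly. a * x + w * (b * z + c * y) = 0 \<Longrightarrow> a * y + b * x + w * (c * z) = 0 \<Longrightarrow>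
      a * z + b * y + c * x = 0 \<Longrightarrow>
      (w ^ 0 * a ^ 3 + w ^ 1 * b ^ 3 + w ^ 2 * c ^ 3 - 3 * w * a * b * c) * x = 0 \<and>
      (w ^ 0 * a ^ 3 + w ^ 1 * b ^ 3 + w ^ 2 * c ^ 3 - 3 * w * a * b * c) * y = 0 \<and>
      (w ^ 0 * a ^ 3 + w ^ 1 * b ^ 3 + w ^ 2 * c ^ 3 - 3 * w * a * b * c) * z = 0"
    by algebra
  from gen[OF e0 e1 c2] have N:
    "(W ^ 0 * p0 ^ 3 + W ^ 1 * p1 ^ 3 + W ^ 2 * p2 ^ 3 - 3 * W * p0 * p1 * p2) * q0 = 0"
    "(W ^ 0 * p0 ^ 3 + W ^ 1 * p1 ^ 3 + W ^ 2 * p2 ^ 3 - 3 * W * p0 * p1 * p2) * q1 = 0"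
    "(W ^ 0 * p0 ^ 3 + W ^ 1 * p1 ^ 3 + W ^ 2 * p2 ^ 3 - 3 * W * p0 * p1 * p2) * q2 = 0" by auto
  have "q0 \<noteq> 0 \<or> q1 \<noteq> 0 \<or> q2 \<noteq> 0" using r20 R2 by auto
  hence "W ^ 0 * p0 ^ 3 + W ^ 1 * p1 ^ 3 + W ^ 2 * p2 ^ 3 - 3 * W * p0 * p1 * p2 = 0" using N by auto
  hence "W ^ 0 * p0 ^ 3 + W ^ 1 * p1 ^ 3 + W ^ 2 * p2 ^ 3 = 3 * W * p0 * p1 * p2" by simp
  from cubic_norm_zero[OF W0 oW three this] have "r1 = 0" using R1 by simp
  thus False using r10 by simp
qed



lemma co3: "coeff (coeff ((vx^3 + [:[:e:]:]*vy^3)^2 * [:[:k:]:]) 3) 3 = 2*e*(k::'a::field)"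
  by (simp add: vx_def vy_def eval_nat_numeral algebra_simps)

lemma co4: "coeff (coeff ((vx^2 + [:[:w:]:]*vy^2)^3 * [:[:k:]:]) 2) 4 = 3*w*(k::'a::field)"
  by (simp add: vx_def vy_def eval_nat_numeral algebra_simps)

lemma unit2: "is_unit (c :: 'a::field poly poly) \<Longrightarrow> \<exists>k. k \<noteq> 0 \<and> c = [:[:k:]:]"
  by (auto simp: is_unit_poly_iff)

lemma unit3: "is_unit (c :: 'a::field poly poly poly) \<Longrightarrow> \<exists>k. k \<noteq> 0 \<and> c = [:[:[:k:]:]:]"
  by (auto simp: is_unit_poly_iff)

lemma sub_argument:
  fixes F :: "'a::field poly poly poly"
  assumes lead: "is_unit (lead_coeff F)" and degF: "degree F > 0"
    and key: "\<And>A B. sub3 n A * sub3 n B = sub3 n F \<Longrightarrow> \<not> is_unit (sub3 n A) \<Longrightarrow> \<not> is_unit (sub3 n B) \<Longrightarrow> False"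
  shows "irreducible F"
proof (rule irreducibleI)
  show F0: "F \<noteq> 0" using degF by auto
  show "\<not> is_unit F" using degF by (auto simp: is_unit_poly_iff)
  fix A B assume FAB: "F = A * B"
  have lAB: "lead_coeff A * lead_coeff B = lead_coeff F" using FAB by (simp add: lead_coeff_mult)
  have uA: "is_unit (lead_coeff A)" using lAB lead by (metis is_unit_mult_iff)
  have uB: "is_unit (lead_coeff B)" using lAB lead by (metis is_unit_mult_iff)
  have nu: "\<not> is_unit (sub3 n H)" if hu: "is_unit (lead_coeff H)" "\<not> is_unit H" for H :: "'a poly poly poly"
  proof -
    have "degree H \<noteq> 0"
    proof
      assume "degree H = 0"
      hence "H = [:lead_coeff H:]" using degree_0_id by (metis)
      thus False using hu by (metis is_unit_const_poly_iff)
    qed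
    obtain k where k: "k \<noteq> 0" "lead_coeff H = [:[:k:]:]" using unit2[OF hu(1)] by blast
    have "coeff (sub3 n H) (degree H) = [:[:k:]:]" by (simp add: coeff_sub3 k sub2_const)
    hence "coeff (sub3 n H) (degree H) \<noteq> 0" using k by simp
    hence "degree (sub3 n H) \<ge> degree H" by (rule le_degree)
    hence "degree (sub3 n H) \<noteq> 0" using \<open>degree H \<noteq> 0\<close> by simp
    thus ?thesis by (auto simp: is_unit_poly_iff)
  qed
  show "is_unit A \<or> is_unit B"
  proof (rule ccontr)
    assume "\<not> (is_unit A \<or> is_unit B)"
    hence "\<not> is_unit (sub3 n A)" "\<not> is_unit (sub3 n B)" using nu uA uB by auto
    moreover have "sub3 n A * sub3 n B = sub3 n F" using FAB by (simp add: hom_mult[OF hom_sub3])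
    ultimately show False using key by blast
  qed
qed

lemma two_prime_split:
  fixes F G P Q :: "'c::{idom_divide,algebraic_semidom}"
  assumes P: "prime_elem P" and Q: "prime_elem Q" and eq: "F * G = P * Q"
    and nF: "\<not> is_unit F" and nG: "\<not> is_unit G"
  shows "\<exists>c. is_unit c \<and> ((F = P * c \<and> G * c = Q) \<or> (G = P * c \<and> F * c = Q))"
proof -
  have P0: "P \<noteq> 0" using P by (simp add: prime_elem_def)
  have gen: "\<exists>c. is_unit c \<and> F' = P * c \<and> G' * c = Q"
    if e: "F' * G' = P * Q" and d: "P dvd F'" and nG': "\<not> is_unit G'" for F' G'
  proof -
    obtain c where c: "F' = P * c" using d by blast
    have cG: "c * G' = Q" using e c P0 by (simp add: mult.assoc)
    have "Q dvd c * G'" using cG by simp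
    hence "Q dvd c \<or> Q dvd G'" using Q by (simp add: prime_elem_dvd_mult_iff)
    thus ?thesis
    proof
      assume "Q dvd c"
      then obtain d where d: "c = Q * d" by blast
      have "Q * (d * G') = Q * 1" using cG d by (simp add: mult.assoc)
      hence "d * G' = 1" using Q by (simp add: prime_elem_def)
      hence "is_unit G'" by (metis dvd_triv_right)
      thus ?thesis using nG' by simp
    next
      assume "Q dvd G'"
      then obtain d where d: "G' = Q * d" by blast
      have "Q * (c * d) = Q * 1" using cG d by (simp add: algebra_simps)
      hence "c * d = 1" using Q by (simp add: prime_elem_def)
      hence "is_unit c" by (metis dvd_triv_left)
      thus ?thesis using c cG by (auto simp: mult.commute)
    qed
  qed
  have "P dvd F * G" using eq by simp
  hence "P dvd F \<or> P dvd G" using P by (simp add: prime_elem_dvd_mult_iff)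
  thus ?thesis
  proof
    assume "P dvd F" thus ?thesis using gen[OF eq _ nG] by blast
  next
    assume "P dvd G" thus ?thesis using gen[of G F] eq nF by (auto simp: mult.commute)
  qed
qed



definition Cg :: "'a::field \<Rightarrow> 'a poly poly poly" where
  "Cg e = [:-((vx^3 + [:[:e:]:]*vy^3)^2), 0, 0, 1:]"

lemma lin_vy: "[:-r, 1:] = vy - [:r:]" by (simp add: vy_def)

lemma prime_Cg:
  fixes e :: "'a::field"
  assumes ee: "e * e = 1" and three: "(3::'a) \<noteq> 0"
  shows "prime_elem (Cg e)"
proof -
  define u :: "'a poly poly" where "u = vx^3 + [:[:e:]:]*vy^3"
  define r :: "'a poly" where "r = [:0, -e:]"
  define E :: "'a poly poly" where "E = [:[:e:]:]"
  define q :: "'a poly poly" where "q = vy^2 + [:r:]*vy + [:r:]^2"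
  have EE: "E * E = 1" unfolding E_def using ee by (simp add: one_pCons)
  have Rc: "[:r:] = - E * vx" unfolding E_def r_def vx_def by simp
  have gen: "\<And>X Y Rc E :: 'a poly poly. E * E = 1 \<Longrightarrow> Rc = - E * X \<Longrightarrow>
       X^3 + E*Y^3 = E * ((Y - Rc) * (Y^2 + Rc*Y + Rc^2))" by algebra
  have uf: "u = E * ([:-r, 1:] * q)" unfolding u_def lin_vy q_def E_def[symmetric]
    by (rule gen[OF EE Rc])
  have e0: "e \<noteq> 0" using ee by auto
  have r0: "r \<noteq> 0" unfolding r_def using e0 by simp
  have three': "(3::'a poly) \<noteq> 0" using three by (metis numeral_poly pCons_eq_0_iff)
  have pq: "poly q r = 3 * r * r" unfolding q_def by (simp add: vy_def power2_eq_square)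
  hence pq0: "poly q r \<noteq> 0" using r0 three' by simp
  have pE: "poly E r \<noteq> 0" unfolding E_def using e0 by simp
  have q0: "q \<noteq> 0" using pq0 by auto
  have E0: "E \<noteq> 0" using pE by auto
  have lin0: "[:-r, 1:] \<noteq> 0" by simp
  have ou: "order r u = 1"
  proof -
    have "order r u = order r E + order r ([:-r, 1:] * q)"
      unfolding uf by (rule order_mult) (unfold mult_eq_0_iff, use E0 q0 lin0 in blast)
    also have "order r ([:-r, 1:] * q) = order r [:-r, 1:] + order r q"
      by (rule order_mult) (unfold mult_eq_0_iff, use q0 lin0 in blast)
    finally show ?thesis using order_0I[OF pE] order_0I[OF pq0] order_lin by simp
  qed
  have u0: "u \<noteq> 0" unfolding uf mult_eq_0_iff using E0 q0 lin0 by blast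
  have oW: "order r (u^2) = 2"
    using order_mult[of u u r] u0 ou by (simp add: power2_eq_square)
  have W0: "u^2 \<noteq> 0" using u0 by simp
  show ?thesis unfolding Cg_def u_def[symmetric] by (rule prime_cubic[OF W0 oW three'])
qed

lemma Cg_not_image:
  fixes e :: "'a::field"
  assumes e0: "e \<noteq> 0" and two: "(2::'a) \<noteq> 0" and c: "is_unit c"
  shows "sub3 2 H \<noteq> Cg e * c"
proof
  assume eq: "sub3 2 H = Cg e * c"
  obtain k where k: "k \<noteq> 0" "c = [:[:[:k:]:]:]" using unit3[OF c] by blast
  have "coeff (sub3 2 H) 0 = coeff (Cg e * c) 0" using eq by simp
  hence c0: "sub2 2 (coeff H 0) = - ((vx^3 + [:[:e:]:]*vy^3)^2 * [:[:k:]:])"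
    by (simp add: coeff_sub3 k Cg_def coeff_mult_0)
  have "coeff (coeff (sub2 2 (coeff H 0)) 3) 3 = - (2 * e * k)" unfolding c0 by (simp only: coeff_minus co3)
  hence "coeff (coeff (sub2 2 (coeff H 0)) 3) 3 \<noteq> 0" using e0 k two by simp
  from coeff_sub2[OF _ this] show False by simp
qed

lemma expand4: "[:c0, 0, 0, 1:] = [:c0:] + varZ^3"
  by (simp add: varZ_def eval_nat_numeral)

lemma cc1: "[:[:1:]:] = (1::'a::comm_ring_1 poly poly)" by (simp add: one_pCons)
lemma ccm1: "[:[:-1:]:] = (-1::'a::comm_ring_1 poly poly)" by (simp add: one_pCons)

lemma sub3_G3: "sub3 2 (G3 :: 'a::field poly poly poly) = Cg 1 * Cg (-1)"
proof -
  have L: "sub3 2 (G3 :: 'a poly poly poly) = (varX^2)^6 + (varY^2)^6 + varZ^6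
      - 2*((varX^2)^3*(varY^2)^3 + (varX^2)^3*varZ^3 + (varY^2)^3*varZ^3)"
    unfolding G3_def by (simp only: hom_add[OF hom_sub3] hom_diff[OF hom_sub3] hom_mult[OF hom_sub3]
        hom_power[OF hom_sub3] hom_numeral[OF hom_sub3] sub3_varX sub3_varY sub3_varZ)
  have R: "Cg 1 * Cg (-1) = ((- ((varX^3 + 1 * varY^3)^2)) + varZ^3) * ((- ((varX^3 + (-1) * varY^3)^2)) + varZ^3)"
    unfolding Cg_def expand4 cc1 ccm1
    by (simp only: cp_minus cp_power cp_add cp_mult one_pCons[symmetric] vX[symmetric] vY[symmetric])
  show ?thesis unfolding L R by algebra
qed

lemma G3_irr:
  assumes two: "(2::'a::field) \<noteq> 0" and three: "(3::'a) \<noteq> 0"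
  shows "irreducible (G3 :: 'a poly poly poly)"
proof (rule sub_argument[where n=2])
  show "is_unit (lead_coeff (G3 :: 'a poly poly poly))" unfolding G3_eq by simp
  show "0 < degree (G3 :: 'a poly poly poly)" unfolding G3_eq by simp
  fix A B :: "'a poly poly poly"
  assume eq: "sub3 2 A * sub3 2 B = sub3 2 G3" and nA: "\<not> is_unit (sub3 2 A)" and nB: "\<not> is_unit (sub3 2 B)"
  have P: "prime_elem (Cg (1::'a))" by (rule prime_Cg) (simp_all add: three)
  have Q: "prime_elem (Cg (-1::'a))" by (rule prime_Cg) (simp_all add: three)
  obtain c where c: "is_unit c" "sub3 2 A = Cg 1 * c \<or> sub3 2 B = Cg 1 * c"
    using two_prime_split[OF P Q eq[unfolded sub3_G3] nA nB] by blast
  thus False using Cg_not_image[of 1 c, OF _ two c(1)] by auto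
qed



lemma unit_solve:
  fixes G S c :: "'c::{idom_divide,algebraic_semidom}"
  assumes "is_unit c" "G * c = S" shows "\<exists>d. is_unit d \<and> G = S * d"
proof -
  obtain d where d: "1 = c * d" using assms(1) by (rule dvdE)
  have "G = G * (c * d)" using d by simp
  also have "\<dots> = S * d" using assms(2) by (simp add: mult.assoc[symmetric])
  finally show ?thesis using d by (metis dvd_triv_right)
qed

lemma three_prime_split_aux:
  fixes F G P Q S :: "'c::{idom_divide,algebraic_semidom}"
  assumes P: "prime_elem P" and Q: "prime_elem Q" and S: "prime_elem S" and eq: "F * G = P * (Q * S)"
    and nF: "\<not> is_unit F" and nG: "\<not> is_unit G" and d: "P dvd F"
  shows "\<exists>c. is_unit c \<and> (F = P*c \<or> G = Q*c \<or> G = S*c)"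
proof -
  have P0: "P \<noteq> 0" using P by (simp add: prime_elem_def)
  obtain f where f: "F = P * f" using d by blast
  have fG: "f * G = Q * S" using eq f P0 by (simp add: mult.assoc)
  show ?thesis
  proof (cases "is_unit f")
    case True thus ?thesis using f by blast
  next
    case False
    obtain c where c: "is_unit c" "(f = Q * c \<and> G * c = S) \<or> (G = Q * c \<and> f * c = S)"
      using two_prime_split[OF Q S fG False nG] by blast
    thus ?thesis
    proof (elim disjE conjE)
      assume "G * c = S"
      then obtain d where "is_unit d" "G = S * d" using unit_solve[OF c(1)] by blast
      thus ?thesis by blast
    next
      assume "G = Q * c" thus ?thesis using c(1) by blast
    qed
  qed
qed

lemma three_prime_split:
  fixes F G P Q S :: "'c::{idom_divide,algebraic_semidom}"
  assumes P: "prime_elem P" and Q: "prime_elem Q" and S: "prime_elem S" and eq: "F * G = P * (Q * S)"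
    and nF: "\<not> is_unit F" and nG: "\<not> is_unit G"
  shows "\<exists>c. is_unit c \<and> (F = P*c \<or> G = P*c \<or> F = Q*c \<or> G = Q*c \<or> F = S*c \<or> G = S*c)"
proof -
  have "P dvd F * G" using eq by simp
  hence "P dvd F \<or> P dvd G" using P by (simp add: prime_elem_dvd_mult_iff)
  thus ?thesis
  proof
    assume "P dvd F" thus ?thesis using three_prime_split_aux[OF P Q S eq nF nG] by blast
  next
    assume "P dvd G"
    moreover have "G * F = P * (Q * S)" using eq by (simp add: mult.commute)
    ultimately show ?thesis using three_prime_split_aux[OF P Q S _ nG nF] by blast
  qed
qed

definition Qg :: "'a::field \<Rightarrow> 'a poly poly poly" where
  "Qg w = [:-((vx^2 + [:[:w:]:]*vy^2)^3), 0, 1:]"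

lemma prime_Qg:
  fixes w mu :: "'a::field"
  assumes mw: "w * (mu * mu) = -1" and two: "(2::'a) \<noteq> 0"
  shows "prime_elem (Qg w)"
proof -
  define c :: "'a poly poly" where "c = vx^2 + [:[:w:]:]*vy^2"
  define r :: "'a poly" where "r = [:0, mu:]"
  define Wc :: "'a poly poly" where "Wc = [:[:w:]:]"
  have w0: "w \<noteq> 0" and mu0: "mu \<noteq> 0" using mw by auto
  have hr: "Wc * ([:r:] * [:r:]) = - (vx^2)" unfolding Wc_def r_def vx_def
    using mw by (simp add: power2_eq_square algebra_simps)
  have gen: "\<And>X Y Rc Wc :: 'a poly poly. Wc * (Rc * Rc) = - (X^2) \<Longrightarrow>
       X^2 + Wc*Y^2 = Wc * ((Y - Rc) * (Y + Rc))" by algebra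
  have cf: "c = Wc * ([:-r, 1:] * (vy + [:r:]))" unfolding c_def lin_vy Wc_def[symmetric]
    by (rule gen[OF hr])
  have two': "(2::'a poly) \<noteq> 0" using two by (metis numeral_poly pCons_eq_0_iff)
  have pq: "poly (vy + [:r:]) r = 2 * r" by (simp add: vy_def)
  have r0: "r \<noteq> 0" unfolding r_def using mu0 by simp
  hence pq0: "poly (vy + [:r:]) r \<noteq> 0" using pq two' by simp
  have pE: "poly Wc r \<noteq> 0" unfolding Wc_def using w0 by simp
  have q0: "vy + [:r:] \<noteq> 0" using pq0 by (metis poly_0)
  have E0: "Wc \<noteq> 0" using pE by auto
  have lin0: "[:-r, 1:] \<noteq> 0" by simp
  have oc: "order r c = 1"
  proof -
    have "order r c = order r Wc + order r ([:-r, 1:] * (vy + [:r:]))"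
      unfolding cf by (rule order_mult) (unfold mult_eq_0_iff, use E0 q0 lin0 in blast)
    also have "order r ([:-r, 1:] * (vy + [:r:])) = order r [:-r, 1:] + order r (vy + [:r:])"
      by (rule order_mult) (unfold mult_eq_0_iff, use q0 lin0 in blast)
    finally show ?thesis using order_0I[OF pE] order_0I[OF pq0] order_lin by simp
  qed
  have c0: "c \<noteq> 0" unfolding cf mult_eq_0_iff using E0 q0 lin0 by blast
  have oW: "order r (c^3) = 3"
  proof -
    have "order r (c * (c * c)) = order r c + (order r c + order r c)"
      using c0 by (simp add: order_mult)
    thus ?thesis using oc by (simp add: eval_nat_numeral)
  qed
  have W0: "c^3 \<noteq> 0" using c0 by simp
  show ?thesis unfolding Qg_def c_def[symmetric] by (rule prime_quad[OF W0, where r=r]) (simp add: oW)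
qed

lemma Qg_not_image:
  fixes w :: "'a::field"
  assumes w0: "w \<noteq> 0" and three: "(3::'a) \<noteq> 0" and c: "is_unit c"
  shows "sub3 3 H \<noteq> Qg w * c"
proof
  assume eq: "sub3 3 H = Qg w * c"
  obtain k where k: "k \<noteq> 0" "c = [:[:[:k:]:]:]" using unit3[OF c] by blast
  have "coeff (sub3 3 H) 0 = coeff (Qg w * c) 0" using eq by simp
  hence c0: "sub2 3 (coeff H 0) = - ((vx^2 + [:[:w:]:]*vy^2)^3 * [:[:k:]:])"
    by (simp add: coeff_sub3 k Qg_def coeff_mult_0)
  have "coeff (coeff (sub2 3 (coeff H 0)) 2) 4 = - (3 * w * k)" unfolding c0 by (simp only: coeff_minus co4)
  hence "coeff (coeff (sub2 3 (coeff H 0)) 2) 4 \<noteq> 0" using w0 k three by simp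
  from coeff_sub2[OF _ this] show False by simp
qed



lemma expand3': "[:c0, 0, 1:] = [:c0:] + varZ^2"
  by (simp add: varZ_def power2_eq_square)

lemma G4_gen:
  fixes X Y Z W :: "'b::idom"
  assumes "W * W + W + 1 = 0"
  shows "((X^3)^2 + (Y^3)^2 - Z^2)^3 + 27*(X^3)^2*(Y^3)^2*Z^2 =
    (- ((X^2 + 1*Y^2)^3) + Z^2) * ((- ((X^2 + W*Y^2)^3) + Z^2) * (-1 * (- ((X^2 + (W*W)*Y^2)^3) + Z^2)))"
  using assms by algebra

lemma sub3_G4:
  fixes om :: "'a::field"
  assumes om: "om * om + om + 1 = 0"
  shows "sub3 3 (G4 :: 'a poly poly poly) = Qg 1 * (Qg om * (-1 * Qg (om * om)))"
proof -
  have L: "sub3 3 (G4 :: 'a poly poly poly) = ((varX^3)^2 + (varY^3)^2 - varZ^2)^3 + 27*(varX^3)^2*(varY^3)^2*varZ^2"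
    unfolding G4_def by (simp only: hom_add[OF hom_sub3] hom_diff[OF hom_sub3] hom_mult[OF hom_sub3]
        hom_power[OF hom_sub3] hom_numeral[OF hom_sub3] sub3_varX sub3_varY sub3_varZ)
  have hO: "[:[:[:om:]:]:] * [:[:[:om:]:]:] + [:[:[:om:]:]:] + 1 = (0::'a poly poly poly)"
  proof -
    have "[:[:[:om * om + om + 1:]:]:] = (0::'a poly poly poly)" using om by simp
    thus ?thesis by (simp only: cp_mult cp_add one_pCons[symmetric])
  qed
  show ?thesis unfolding L Qg_def expand3'
    by (simp only: cp_minus cp_power cp_add cp_mult one_pCons[symmetric] vX[symmetric] vY[symmetric])
       (rule G4_gen[OF hO])
qed

lemma sqrt_inv:
  fixes w :: "'a::alg_closed_field"
  assumes "w \<noteq> 0" shows "\<exists>mu. w * (mu * mu) = -1"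
proof -
  obtain y where y: "y ^ 2 = - inverse w" using nth_root_exists[of 2 "- inverse w"] by auto
  have "w * (y * y) = w * (- inverse w)" using y by (simp add: power2_eq_square)
  also have "\<dots> = -1" using assms by simp
  finally show ?thesis by blast
qed

lemma G4_irr:
  assumes two: "(2::'a::alg_closed_field) \<noteq> 0" and three: "(3::'a) \<noteq> 0"
  shows "irreducible (G4 :: 'a poly poly poly)"
proof -
  have "degree [:1, 1, 1::'a:] > 0" by simp
  then obtain om :: 'a where "poly [:1, 1, 1:] om = 0" using alg_closed_imp_poly_has_root by blast
  hence om: "om * om + om + 1 = 0" by (simp add: algebra_simps)
  have om0: "om \<noteq> 0" using om by auto
  have om20: "om * om \<noteq> 0" using om0 by simp
  have pr: "prime_elem (Qg w)" if wn: "w \<noteq> 0" for w :: 'a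
  proof -
    obtain mu where "w * (mu * mu) = -1" using sqrt_inv[OF wn] by blast
    thus ?thesis using prime_Qg two by blast
  qed
  have P: "prime_elem (Qg (1::'a))" by (rule pr) simp
  have Q: "prime_elem (Qg om)" by (rule pr[OF om0])
  have S: "prime_elem (-1 * Qg (om * om))" using pr[OF om20] prime_elem_mult_unit_left[of "-1" "Qg (om*om)"] by (simp del: mult_minus_left mult_1_left)
  have ni: "sub3 3 H \<noteq> Qg w * c" if wn: "w \<noteq> 0" "is_unit c" for H c and w :: 'a
    by (rule Qg_not_image[OF wn(1) three wn(2)])
  show ?thesis
  proof (rule sub_argument[where n=3])
    show "is_unit (lead_coeff (G4 :: 'a poly poly poly))" unfolding G4_eq by simp
    show "0 < degree (G4 :: 'a poly poly poly)" unfolding G4_eq by simp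
    fix A B :: "'a poly poly poly"
    assume eq: "sub3 3 A * sub3 3 B = sub3 3 G4" and nA: "\<not> is_unit (sub3 3 A)" and nB: "\<not> is_unit (sub3 3 B)"
    obtain c where c: "is_unit c" and cs: "sub3 3 A = Qg 1 * c \<or> sub3 3 B = Qg 1 * c \<or>
        sub3 3 A = Qg om * c \<or> sub3 3 B = Qg om * c \<or>
        sub3 3 A = (-1 * Qg (om * om)) * c \<or> sub3 3 B = (-1 * Qg (om * om)) * c"
      using three_prime_split[OF P Q S eq[unfolded sub3_G4[OF om]] nA nB] by blast
    have c': "is_unit (-1 * c)" using c by simp
    have e: "(-1 * Qg (om * om)) * c = Qg (om * om) * (-1 * c)" by (simp add: algebra_simps)
    show False using cs ni[of 1 c] ni[OF om0 c] ni[OF om20 c'] c unfolding e by auto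
  qed
qed



theorem lemmaA1:
  fixes p q k :: nat
  assumes "prime p" and "p > 3" and "k \<ge> 1" and "q = p ^ k"
    and "CHAR('a::alg_closed_field) = p"
    and "algebraic_over_prime_field TYPE('a)"
  shows "irreducible (G1 :: 'a poly poly poly) \<and> irreducible (G2 :: 'a poly poly poly) \<and>
         irreducible (G3 :: 'a poly poly poly) \<and> irreducible (G4 :: 'a poly poly poly)"
proof -
  have nz: "(of_nat m :: 'a) \<noteq> 0" if "0 < m" "m \<le> 3" for m
  proof
    assume "(of_nat m :: 'a) = 0"
    hence "p dvd m" using assms(5) by (simp add: of_nat_eq_0_iff_char_dvd)
    hence "p \<le> m" using that by (simp add: dvd_imp_le)
    thus False using that assms(2) by simp
  qed
  have two: "(2::'a) \<noteq> 0" using nz[of 2] by simp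
  have three: "(3::'a) \<noteq> 0" using nz[of 3] by simp
  obtain i :: 'a where "i ^ 2 = -1" using nth_root_exists[of 2 "-1::'a"] by auto
  hence i: "i * i = -1" by (simp add: power2_eq_square)
  show ?thesis using G1_irr[OF two i] G2_irr[OF two] G3_irr[OF two three] G4_irr[OF two three] by blast
qed

end
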